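(* Let $K$ be a field of characteristic $p>0$ such that $K/k$ is a finitely generated field extension, where $k=\bigcap_{n\ge0}K^{p^n}$. Let $n$ be a positive integer. The map $W_\bullet\mapsto W_n$ is a bijection from the set of power towers on $K$ of length $n$ to the set of subfields of $K$ of exponent $n$.
   Context: A power tower on $K$ is a sequence of subfields $W_0,W_1,\ldots$ of $K$ with $W_j=W_i\cdot K^{p^j}$ whenever $j\le i$ ($\cdot$ = compositum in $K$). It has length $n$ if $n$ is the least integer with $W_N=W_n$ for all $N\ge n$. A subfield $W\subseteq K$ has exponent $n$ if $n$ is the least integer with $K^{p^n}\subseteq W$. *)

theory Defs
  imports Main
begin

text \<open>Subfields of a field (the ambient field K is the type 'a).\<close>
definition is_subfield :: "'a::field set \<Rightarrow> bool" where
  "is_subfield F \<longleftrightarrow> 0 \<in> F \<and> 1 \<in> F \<and>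
     (\<forall>x\<in>F. \<forall>y\<in>F. x + y \<in> F \<and> x * y \<in> F) \<and>
     (\<forall>x\<in>F. - x \<in> F \<and> inverse x \<in> F)"

definition gen_field :: "'a::field set \<Rightarrow> 'a set" where
  "gen_field S = \<Inter>{F. is_subfield F \<and> S \<subseteq> F}"

definition compositum :: "'a::field set \<Rightarrow> 'a set \<Rightarrow> 'a set" where
  "compositum A B = gen_field (A \<union> B)"

definition frob_image :: "nat \<Rightarrow> 'a::field set" where
  "frob_image j = range (\<lambda>x::'a. x ^ (CHAR('a) ^ j))"

definition perfect_core :: "'a::field set" where
  "perfect_core = (\<Inter>n. frob_image n)"

definition fin_gen_over :: "'a::field set \<Rightarrow> bool" where
  "fin_gen_over k \<longleftrightarrow> (\<exists>S. finite S \<and> gen_field (k \<union> S) = UNIV)"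

definition power_tower :: "(nat \<Rightarrow> 'a::field set) \<Rightarrow> bool" where
  "power_tower W \<longleftrightarrow> (\<forall>i. is_subfield (W i)) \<and>
     (\<forall>i j. j \<le> i \<longrightarrow> W j = compositum (W i) (frob_image j))"

definition tower_length :: "(nat \<Rightarrow> 'a::field set) \<Rightarrow> nat \<Rightarrow> bool" where
  "tower_length W n \<longleftrightarrow> (\<forall>N\<ge>n. W N = W n) \<and> (\<forall>m<n. \<not> (\<forall>N\<ge>m. W N = W m))"

definition field_exponent :: "'a::field set \<Rightarrow> nat \<Rightarrow> bool" where
  "field_exponent W n \<longleftrightarrow> frob_image n \<subseteq> W \<and> (\<forall>m<n. \<not> frob_image m \<subseteq> W)"

end

theory Submission
  imports Defs
begin

lemma gen_field_sub: "S \<subseteq> gen_field S"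
  unfolding gen_field_def by blast

lemma gen_field_least: "is_subfield F \<Longrightarrow> S \<subseteq> F \<Longrightarrow> gen_field S \<subseteq> F"
  unfolding gen_field_def by blast

lemma gen_field_subfield: "is_subfield (gen_field S)"
  unfolding gen_field_def is_subfield_def by blast

lemma gen_field_id: "is_subfield F \<Longrightarrow> gen_field F = F"
  using gen_field_sub gen_field_least by blast

lemma gen_field_mono: "S \<subseteq> T \<Longrightarrow> gen_field S \<subseteq> gen_field T"
  by (meson gen_field_least gen_field_sub gen_field_subfield order_trans)

lemma frob_anti: "j \<le> i \<Longrightarrow> frob_image i \<subseteq> (frob_image j :: 'a::field set)"
proof
  fix y :: 'a assume j: "j \<le> i" and "y \<in> frob_image i"
  then obtain x where y: "y = x ^ (CHAR('a) ^ i)" unfolding frob_image_def by auto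
  have "CHAR('a) ^ i = CHAR('a) ^ (i - j) * CHAR('a) ^ j"
    using j by (metis le_add_diff_inverse2 power_add)
  then have "y = (x ^ (CHAR('a) ^ (i - j))) ^ (CHAR('a) ^ j)"
    using y by (metis power_mult)
  then show "y \<in> frob_image j" unfolding frob_image_def by blast
qed

lemma comp_sub1: "A \<subseteq> compositum A B"
  unfolding compositum_def using gen_field_sub by blast

lemma comp_sub2: "B \<subseteq> compositum A B"
  unfolding compositum_def using gen_field_sub by blast

lemma comp_absorb: "is_subfield A \<Longrightarrow> B \<subseteq> A \<Longrightarrow> compositum A B = A"
  unfolding compositum_def by (simp add: Un_absorb2 gen_field_id)

theorem mainTheorem9:
  assumes "CHAR('a::field) > 0"
    and "fin_gen_over (perfect_core :: 'a set)"
    and "n > 0"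
  shows "bij_betw (\<lambda>W. W n)
           {W :: nat \<Rightarrow> 'a set. power_tower W \<and> tower_length W n}
           {V :: 'a set. is_subfield V \<and> field_exponent V n}"
proof (rule bij_betw_imageI)
  show "inj_on (\<lambda>W. W n) {W :: nat \<Rightarrow> 'a set. power_tower W \<and> tower_length W n}"
  proof (rule inj_onI)
    fix W W' :: "nat \<Rightarrow> 'a set"
    assume W: "W \<in> {W. power_tower W \<and> tower_length W n}"
      and W': "W' \<in> {W. power_tower W \<and> tower_length W n}" and e: "W n = W' n"
    show "W = W'"
    proof
      fix j
      show "W j = W' j"
      proof (cases "j \<le> n")
        case True
        have "W j = compositum (W n) (frob_image j)" using W True unfolding power_tower_def by blast
        moreover have "W' j = compositum (W' n) (frob_image j)" using W' True unfolding power_tower_def by blast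
        ultimately show ?thesis using e by simp
      next
        case False
        then have "n \<le> j" by simp
        then have "W j = W n" "W' j = W' n" using W W' unfolding tower_length_def by blast+
        then show ?thesis using e by simp
      qed
    qed
  qed
  show "(\<lambda>W. W n) ` {W :: nat \<Rightarrow> 'a set. power_tower W \<and> tower_length W n}
      = {V :: 'a set. is_subfield V \<and> field_exponent V n}"
  proof
    show "(\<lambda>W. W n) ` {W :: nat \<Rightarrow> 'a set. power_tower W \<and> tower_length W n}
      \<subseteq> {V :: 'a set. is_subfield V \<and> field_exponent V n}"
    proof clarify
      fix W :: "nat \<Rightarrow> 'a set"
      assume pt: "power_tower W" and tl: "tower_length W n"
      have sf: "\<And>i. is_subfield (W i)" using pt unfolding power_tower_def by auto
      have rec: "\<And>i j. j \<le> i \<Longrightarrow> W j = compositum (W i) (frob_image j)"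
        using pt unfolding power_tower_def by auto
      have fn: "frob_image n \<subseteq> W n" using rec[of n n] comp_sub2 by auto
      have "\<not> frob_image m \<subseteq> W n" if m: "m < n" for m
      proof
        assume sub: "frob_image m \<subseteq> W n"
        have wm: "W m = W n" proof -
          have "W m = compositum (W n) (frob_image m)" using m by (intro rec) simp
          also have "\<dots> = W n" by (rule comp_absorb[OF sf[of n] sub])
          finally show ?thesis .
        qed
        have "\<forall>N\<ge>m. W N = W m"
        proof (intro allI impI)
          fix N assume N: "m \<le> N"
          show "W N = W m"
          proof (cases "n \<le> N")
            case True
            have "W N = W n" using tl True unfolding tower_length_def by blast
            then show ?thesis using wm by simp
          next
            case False
            have "W N = compositum (W n) (frob_image N)" using False by (intro rec) simp
            then have "W n \<subseteq> W N" using comp_sub1 by metis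
            moreover have "W m = compositum (W N) (frob_image m)" using N by (intro rec)
            then have "W N \<subseteq> W m" using comp_sub1 by metis
            ultimately show ?thesis using wm by auto
          qed
        qed
        moreover have "\<not> (\<forall>N\<ge>m. W N = W m)" using tl m unfolding tower_length_def by blast
        ultimately show False by blast
      qed
      then show "is_subfield (W n) \<and> field_exponent (W n) n"
        using sf fn unfolding field_exponent_def by auto
    qed
    show "{V :: 'a set. is_subfield V \<and> field_exponent V n}
      \<subseteq> (\<lambda>W. W n) ` {W :: nat \<Rightarrow> 'a set. power_tower W \<and> tower_length W n}"
    proof clarify
      fix V :: "'a set"
      assume sV: "is_subfield V" and eV: "field_exponent V n"
      define W where "W = (\<lambda>j. compositum V (frob_image j))"
      have big: "\<And>N. n \<le> N \<Longrightarrow> W N = V"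
      proof -
        fix N :: nat assume "n \<le> N"
        then have "frob_image N \<subseteq> (frob_image n :: 'a set)" by (rule frob_anti)
        moreover have "frob_image n \<subseteq> V" using eV unfolding field_exponent_def by blast
        ultimately have "frob_image N \<subseteq> V" by (rule order_trans)
        then show "W N = V" unfolding W_def by (rule comp_absorb[OF sV])
      qed
      have pt: "power_tower W"
        unfolding power_tower_def
      proof (intro conjI allI impI)
        fix i show "is_subfield (W i)" unfolding W_def compositum_def by (rule gen_field_subfield)
      next
        fix i j :: nat assume ji: "j \<le> i"
        have fa: "frob_image i \<subseteq> (frob_image j :: 'a set)" using frob_anti ji .
        show "W j = compositum (W i) (frob_image j)"
        proof
          show "W j \<subseteq> compositum (W i) (frob_image j)"
            unfolding W_def compositum_def
          proof (rule gen_field_mono)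
            have "V \<subseteq> gen_field (V \<union> frob_image i)" using gen_field_sub[of "V \<union> frob_image i"] by simp
            then show "V \<union> frob_image j \<subseteq> gen_field (V \<union> frob_image i) \<union> frob_image j" by auto
          qed
          show "compositum (W i) (frob_image j) \<subseteq> W j"
            unfolding W_def compositum_def
          proof (rule gen_field_least[OF gen_field_subfield])
            have s: "V \<union> frob_image j \<subseteq> gen_field (V \<union> frob_image j)" by (rule gen_field_sub)
            have "gen_field (V \<union> frob_image i) \<subseteq> gen_field (V \<union> frob_image j)"
              by (rule gen_field_mono) (use fa in auto)
            then show "gen_field (V \<union> frob_image i) \<union> frob_image j \<subseteq> gen_field (V \<union> frob_image j)"
              using s by auto
          qed
        qed
      qed
      have tl: "tower_length W n"
        unfolding tower_length_def
      proof (intro conjI allI impI notI)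
        fix N :: nat assume "n \<le> N" then have "W N = V" by (rule big)
        moreover have "W n = V" by (rule big) simp
        ultimately show "W N = W n" by simp
      next
        fix m assume m: "m < n" and h: "\<forall>N\<ge>m. W N = W m"
        have "W n = W m" using h m less_imp_le by blast
        moreover have "W n = V" by (rule big) simp
        ultimately have "W m = V" by simp
        then have "frob_image m \<subseteq> V" unfolding W_def using comp_sub2 by metis
        moreover have "\<not> frob_image m \<subseteq> V" using eV m unfolding field_exponent_def by blast
        ultimately show False by blast
      qed
      show "V \<in> (\<lambda>W. W n) ` {W. power_tower W \<and> tower_length W n}"
        proof (rule image_eqI)
        have "W n = V" by (rule big) simp
        then show "V = W n" by simp
        show "W \<in> {W. power_tower W \<and> tower_length W n}" using pt tl by simp
      qed
    qed
  qed
qed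

end
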